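(* If $H\in\mathcal{H}'$ and $H\notin\{K_4,W_5,M_7,J_7\}$, then $|V(H)|\ge 8$.
   Context: $M_7$ (Moser spindle): vertices $v_1,\dots,v_5,w_1,w_2$, with 5-cycle $v_1\cdots v_5$, $w_1$ adjacent to $v_1,v_2,v_3$ and $w_2$ adjacent to $v_1,v_4,v_5$. A near-bipartite coloring of a graph is a partition of its vertices into $I,F$ with $I$ independent and $G[F]$ a forest; a graph is nb-critical if it has none but every proper subgraph has one. Base graphs: $K_4$; the wheel $W_5$ (5-cycle plus a vertex adjacent to all its vertices); $J_7$, with vertices $w_1,\dots,w_4,v_1,v_2,v_3$ and edges $w_1v_1,w_1v_3,w_1w_4,w_2v_1,w_2v_2,w_2w_4,w_3v_2,w_3v_3,w_3w_4,v_1v_2,v_1v_3,v_2v_3$; and $J_{12}$, with vertices $a,b,p_1,\dots,p_4,q_1,\dots,q_6$ and edges $ab,p_1p_2,p_3p_4,ap_1,ap_2,bp_3,bp_4,q_1p_1,q_1p_2,q_2p_1,q_2p_2,q_3p_3,q_3p_4,q_4p_3,q_4p_4,q_5q_1,q_5q_3,q_6q_2,q_6q_4,q_5q_6$. The family $\mathcal{H}'$ is defined recursively: $s,t$ are specially-linked in $J$ if there exist $H\in\mathcal{H}'$ and $vw\in E(H)$ such that $J$ contains a subgraph isomorphic to $H-vw$ with $v\mapsto s,w\mapsto t$. $H\in\mathcal{H}'$ iff $H$ is a base graph, or $H$ is nb-critical with an induced cycle $C=x_1\cdots x_k$, $k\in\{3,5\}$, all $x_i$ of degree 3 in $H$, such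 that with $N(x_j)=\{x_{j-1},x_{j+1},z_j\}$ (indices mod $k$), whenever $z_j\ne z_{j+1}$ the vertices $z_j,z_{j+1}$ are specially-linked in $H-V(C)$. *)

theory Defs
  imports Main
begin

type_synonym 'a ugraph = "'a set \<times> 'a set set"

definition verts :: "'a ugraph \<Rightarrow> 'a set" where "verts G = fst G"
definition edges :: "'a ugraph \<Rightarrow> 'a set set" where "edges G = snd G"

definition wf_graph :: "'a ugraph \<Rightarrow> bool" where
  "wf_graph G \<longleftrightarrow> finite (verts G) \<and>
     (\<forall>e\<in>edges G. \<exists>u v. u \<noteq> v \<and> e = {u, v} \<and> u \<in> verts G \<and> v \<in> verts G)"

definition adj :: "'a ugraph \<Rightarrow> 'a \<Rightarrow> 'a \<Rightarrow> bool" where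
  "adj G u v \<longleftrightarrow> {u, v} \<in> edges G"

definition nbhd :: "'a ugraph \<Rightarrow> 'a \<Rightarrow> 'a set" where
  "nbhd G v = {u. adj G v u}"

definition degree :: "'a ugraph \<Rightarrow> 'a \<Rightarrow> nat" where
  "degree G v = card (nbhd G v)"

definition is_cycle :: "'a ugraph \<Rightarrow> 'a list \<Rightarrow> bool" where
  "is_cycle G xs \<longleftrightarrow> length xs \<ge> 3 \<and> distinct xs \<and> set xs \<subseteq> verts G \<and>
     (\<forall>i < length xs. adj G (xs ! i) (xs ! ((i + 1) mod length xs)))"

definition induced_cycle :: "'a ugraph \<Rightarrow> 'a list \<Rightarrow> bool" where
  "induced_cycle G xs \<longleftrightarrow> is_cycle G xs \<and>
     (\<forall>u\<in>set xs. \<forall>v\<in>set xs. adj G u v \<longrightarrow>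
        (\<exists>i < length xs. {u, v} = {xs ! i, xs ! ((i + 1) mod length xs)}))"

definition independent :: "'a ugraph \<Rightarrow> 'a set \<Rightarrow> bool" where
  "independent G I \<longleftrightarrow> I \<subseteq> verts G \<and> (\<forall>u\<in>I. \<forall>v\<in>I. \<not> adj G u v)"

text \<open>The induced subgraph G[F] is a forest: it contains no cycle (the edges of G[F]
  are exactly the edges of G between vertices of F).\<close>
definition induces_forest :: "'a ugraph \<Rightarrow> 'a set \<Rightarrow> bool" where
  "induces_forest G F \<longleftrightarrow> F \<subseteq> verts G \<and> \<not> (\<exists>xs. is_cycle G xs \<and> set xs \<subseteq> F)"

definition nb_coloring :: "'a ugraph \<Rightarrow> 'a set \<Rightarrow> 'a set \<Rightarrow> bool" where
  "nb_coloring G I F \<longleftrightarrow> I \<union> F = verts G \<and> I \<inter> F = {} \<and>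
     independent G I \<and> induces_forest G F"

definition near_bipartite :: "'a ugraph \<Rightarrow> bool" where
  "near_bipartite G \<longleftrightarrow> (\<exists>I F. nb_coloring G I F)"

definition subgraph :: "'a ugraph \<Rightarrow> 'a ugraph \<Rightarrow> bool" where
  "subgraph H G \<longleftrightarrow> wf_graph H \<and> verts H \<subseteq> verts G \<and> edges H \<subseteq> edges G"

definition nb_critical :: "'a ugraph \<Rightarrow> bool" where
  "nb_critical G \<longleftrightarrow> wf_graph G \<and> \<not> near_bipartite G \<and>
     (\<forall>H. subgraph H G \<and> H \<noteq> G \<longrightarrow> near_bipartite H)"

definition delete_vertices :: "'a ugraph \<Rightarrow> 'a set \<Rightarrow> 'a ugraph" where
  "delete_vertices G S = (verts G - S, {e \<in> edges G. e \<inter> S = {}})"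

definition delete_edge :: "'a ugraph \<Rightarrow> 'a set \<Rightarrow> 'a ugraph" where
  "delete_edge G e = (verts G, edges G - {e})"

definition embeds_via :: "('a \<Rightarrow> 'b) \<Rightarrow> 'a ugraph \<Rightarrow> 'b ugraph \<Rightarrow> bool" where
  "embeds_via f H J \<longleftrightarrow> inj_on f (verts H) \<and> f ` verts H \<subseteq> verts J \<and>
     (\<forall>u v. {u, v} \<in> edges H \<longrightarrow> {f u, f v} \<in> edges J)"

definition graph_iso :: "'a ugraph \<Rightarrow> 'b ugraph \<Rightarrow> bool" where
  "graph_iso G H \<longleftrightarrow> (\<exists>f. bij_betw f (verts G) (verts H) \<and>
     (\<forall>u\<in>verts G. \<forall>v\<in>verts G. {u, v} \<in> edges G \<longleftrightarrow> {f u, f v} \<in> edges H))"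

definition mk_graph :: "nat \<Rightarrow> (nat \<times> nat) list \<Rightarrow> nat ugraph" where
  "mk_graph n es = ({0..<n}, (\<lambda>(a, b). {a, b}) ` set es)"

definition K4 :: "nat ugraph" where
  "K4 = mk_graph 4 [(0,1),(0,2),(0,3),(1,2),(1,3),(2,3)]"

definition W5 :: "nat ugraph" where
  "W5 = mk_graph 6 [(0,1),(1,2),(2,3),(3,4),(4,0),(5,0),(5,1),(5,2),(5,3),(5,4)]"

text \<open>M7: v1..v5 = 1..5, w1 = 6, w2 = 7 (vertex 0 unused, so vertex set is 1..7)\<close>
definition M7 :: "nat ugraph" where
  "M7 = ({1..7}, (\<lambda>(a, b). {a, b}) ` set
     [(1,2),(2,3),(3,4),(4,5),(5,1),(6,1),(6,2),(6,3),(7,1),(7,4),(7,5)])"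

text \<open>J7: w1..w4 = 0..3, v1,v2,v3 = 4,5,6\<close>
definition J7 :: "nat ugraph" where
  "J7 = mk_graph 7 [(0,4),(0,6),(0,3),(1,4),(1,5),(1,3),(2,5),(2,6),(2,3),(4,5),(4,6),(5,6)]"

text \<open>J12: a = 0, b = 1, p1..p4 = 2..5, q1..q6 = 6..11\<close>
definition J12 :: "nat ugraph" where
  "J12 = mk_graph 12 [(0,1),(2,3),(4,5),(0,2),(0,3),(1,4),(1,5),(6,2),(6,3),(7,2),(7,3),
                      (8,4),(8,5),(9,4),(9,5),(10,6),(10,8),(11,7),(11,9),(10,11)]"

definition base_graph :: "nat ugraph \<Rightarrow> bool" where
  "base_graph H \<longleftrightarrow> graph_iso H K4 \<or> graph_iso H W5 \<or> graph_iso H J7 \<or> graph_iso H J12"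

text \<open>Graphs of the family are represented with vertices in nat (every finite graph is
  isomorphic to one of these). s, t are specially linked in J iff there exist H0 in H'
  and an edge vw of H0 such that J contains a subgraph isomorphic to H0 - vw with v to s,
  w to t.\<close>
inductive_set Hp :: "nat ugraph set" where
  base: "wf_graph H \<Longrightarrow> base_graph H \<Longrightarrow> H \<in> Hp"
| step: "nb_critical H \<Longrightarrow> induced_cycle H xs \<Longrightarrow> length xs \<in> {3, 5} \<Longrightarrow>
     (\<forall>x\<in>set xs. degree H x = 3) \<Longrightarrow>
     (\<forall>j < length xs. \<forall>z z'.
        (let k = length xs;
             xm = xs ! ((j + k - 1) mod k); x = xs ! j;
             x1 = xs ! ((j + 1) mod k); x2 = xs ! ((j + 2) mod k)
         in nbhd H x = {xm, x1, z} \<and> nbhd H x1 = {x, x2, z'} \<and> z \<noteq> z')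
        \<longrightarrow> (\<exists>H0 v w f. H0 \<in> Hp \<and> {v, w} \<in> edges H0 \<and>
               embeds_via f (delete_edge H0 {v, w}) (delete_vertices H (set xs)) \<and>
               f v = z \<and> f w = z')) \<Longrightarrow>
     H \<in> Hp"

end

theory Submission
  imports Defs
begin

lemma adj_sym: "adj G u v = adj G v u"
  by (simp add: adj_def insert_commute)

lemma all3: "(\<forall>i<Suc (Suc (Suc 0)). P i) \<longleftrightarrow> P 0 \<and> P 1 \<and> P 2"
  by (auto simp: less_Suc_eq eval_nat_numeral)
lemma all5: "(\<forall>i<Suc (Suc (Suc (Suc (Suc 0)))). P i) \<longleftrightarrow> P 0 \<and> P 1 \<and> P 2 \<and> P 3 \<and> P 4"
  by (auto simp: less_Suc_eq eval_nat_numeral)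
lemma is_cycle3: "is_cycle G [a,b,c] \<longleftrightarrow> distinct [a,b,c] \<and> {a,b,c} \<subseteq> verts G \<and> adj G a b \<and> adj G b c \<and> adj G c a"
  unfolding is_cycle_def by (simp add: all3)
lemma is_cycle5: "is_cycle G [a,b,c,d,e] \<longleftrightarrow> distinct [a,b,c,d,e] \<and> {a,b,c,d,e} \<subseteq> verts G \<and> adj G a b \<and> adj G b c \<and> adj G c d \<and> adj G d e \<and> adj G e a"
  unfolding is_cycle_def by (simp add: all5)
lemma adj_wf: "wf_graph G \<Longrightarrow> adj G u v \<Longrightarrow> u \<in> verts G \<and> v \<in> verts G \<and> u \<noteq> v"
  unfolding wf_graph_def adj_def by (metis doubleton_eq_iff insert_absorb2)

lemma card3: "card A = 3 \<Longrightarrow> a \<in> A \<Longrightarrow> b \<in> A \<Longrightarrow> a \<noteq> b \<Longrightarrow> \<exists>z. A = {a,b,z} \<and> z \<noteq> a \<and> z \<noteq> b"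
proof -
  assume h: "card A = 3" "a \<in> A" "b \<in> A" "a \<noteq> b"
  then have f: "finite A" by (metis card.infinite zero_neq_numeral)
  have "card (A - {a,b}) = 1" using h f by (simp add: card_Diff_subset)
  then obtain z where "A - {a,b} = {z}" by (meson card_1_singletonE)
  then show ?thesis using h by blast
qed

lemma iso_from_map:
  assumes bij: "bij_betw g (verts B) (verts A)"
    and wfB: "\<forall>e\<in>edges B. \<exists>a b. e = {a,b} \<and> a \<in> verts B \<and> b \<in> verts B"
    and EA: "edges A = (\<lambda>e. g ` e) ` edges B"
  shows "graph_iso A B"
proof -
  define f where "f = inv_into (verts B) g"
  have bf: "bij_betw f (verts A) (verts B)" unfolding f_def using bij by (rule bij_betw_inv_into)
  have gf: "g (f u) = u" if "u \<in> verts A" for u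
    using that bij unfolding f_def by (meson bij_betw_inv_into_right)
  have fg: "f (g a) = a" if "a \<in> verts B" for a
    using that bij unfolding f_def by (meson bij_betw_inv_into_left)
  have fA: "f u \<in> verts B" if "u \<in> verts A" for u using bf that by (meson bij_betwE)
  have "{u, v} \<in> edges A \<longleftrightarrow> {f u, f v} \<in> edges B" if u: "u \<in> verts A" and v: "v \<in> verts A" for u v
  proof
    assume "{u, v} \<in> edges A"
    then obtain e where e: "e \<in> edges B" "{u,v} = g ` e" using EA by auto
    then obtain a b where ab: "e = {a,b}" "a \<in> verts B" "b \<in> verts B" using wfB by blast
    then have "{u,v} = {g a, g b}" using e by auto
    then have "(u = g a \<and> v = g b) \<or> (u = g b \<and> v = g a)" by (auto simp: doubleton_eq_iff)
    then have "{f u, f v} = {a, b}" using fg ab by auto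
    then show "{f u, f v} \<in> edges B" using e ab by simp
  next
    assume "{f u, f v} \<in> edges B"
    then have "g ` {f u, f v} \<in> edges A" using EA by blast
    then show "{u, v} \<in> edges A" using gf u v by simp
  qed
  then show ?thesis unfolding graph_iso_def using bf by blast
qed


lemma crit_eq:
  assumes "nb_critical H" "wf_graph S" "verts S \<subseteq> verts H" "edges S \<subseteq> edges H" "\<not> near_bipartite S"
  shows "H = S"
  using assms unfolding nb_critical_def subgraph_def by metis

lemma nbI: "nb_coloring S I F \<Longrightarrow> (\<forall>x\<in>verts S. (x \<in> I \<or> x \<in> F) \<and> \<not>(x \<in> I \<and> x \<in> F)) \<and>
   (\<forall>u v. adj S u v \<longrightarrow> \<not>(u \<in> I \<and> v \<in> I)) \<and> (\<forall>xs. is_cycle S xs \<longrightarrow> \<not> set xs \<subseteq> F)"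
  unfolding nb_coloring_def independent_def induces_forest_def by blast

lemma K4_sub:
  assumes crit: "nb_critical H" and d: "distinct [a,b,c,d]"
    and e: "adj H a b" "adj H a c" "adj H a d" "adj H b c" "adj H b d" "adj H c d"
  shows "H = ({a,b,c,d}, {{a,b},{a,c},{a,d},{b,c},{b,d},{c,d}})"
proof (rule crit_eq[OF crit])
  let ?S = "({a,b,c,d}, {{a,b},{a,c},{a,d},{b,c},{b,d},{c,d}})"
  have wf: "wf_graph H" using crit nb_critical_def by blast
  show "wf_graph ?S" using d unfolding wf_graph_def verts_def edges_def by auto
  show "verts ?S \<subseteq> verts H" using e adj_wf[OF wf] by (auto simp: verts_def)
  show "edges ?S \<subseteq> edges H" using e by (auto simp: edges_def adj_def)
  show "\<not> near_bipartite ?S"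
  proof
    assume "near_bipartite ?S"
    then obtain I F where "nb_coloring ?S I F" unfolding near_bipartite_def by blast
    note n = nbI[OF this]
    have c: "is_cycle ?S [a,b,c]" "is_cycle ?S [a,b,d]" "is_cycle ?S [a,c,d]" "is_cycle ?S [b,c,d]"
      using d by (auto simp: is_cycle3 adj_def verts_def edges_def)
    have ad: "adj ?S a b" "adj ?S a c" "adj ?S a d" "adj ?S b c" "adj ?S b d" "adj ?S c d"
      by (auto simp: adj_def edges_def)
    have v: "a \<in> verts ?S" "b \<in> verts ?S" "c \<in> verts ?S" "d \<in> verts ?S" by (auto simp: verts_def)
    have c2: "\<not> (a \<in> F \<and> b \<in> F \<and> c \<in> F)" "\<not> (a \<in> F \<and> b \<in> F \<and> d \<in> F)"
       "\<not> (a \<in> F \<and> c \<in> F \<and> d \<in> F)" "\<not> (b \<in> F \<and> c \<in> F \<and> d \<in> F)"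
      using n c by auto
    have i2: "\<not>(a \<in> I \<and> b \<in> I)" "\<not>(a \<in> I \<and> c \<in> I)" "\<not>(a \<in> I \<and> d \<in> I)"
      "\<not>(b \<in> I \<and> c \<in> I)" "\<not>(b \<in> I \<and> d \<in> I)" "\<not>(c \<in> I \<and> d \<in> I)"
      using n ad by blast+
    have v2: "a \<in> I \<or> a \<in> F" "b \<in> I \<or> b \<in> F" "c \<in> I \<or> c \<in> F" "d \<in> I \<or> d \<in> F"
      using n v by blast+
    show False using c2 i2 v2 by argo
  qed
qed

lemma W5_sub:
  assumes crit: "nb_critical H" and d: "distinct [a,b,c,d,e,z]"
    and e: "adj H a b" "adj H b c" "adj H c d" "adj H d e" "adj H e a"
       "adj H z a" "adj H z b" "adj H z c" "adj H z d" "adj H z e"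
  shows "H = ({a,b,c,d,e,z}, {{a,b},{b,c},{c,d},{d,e},{e,a},{z,a},{z,b},{z,c},{z,d},{z,e}})"
proof (rule crit_eq[OF crit])
  let ?S = "({a,b,c,d,e,z}, {{a,b},{b,c},{c,d},{d,e},{e,a},{z,a},{z,b},{z,c},{z,d},{z,e}})"
  have wf: "wf_graph H" using crit nb_critical_def by blast
  show "wf_graph ?S" using d unfolding wf_graph_def verts_def edges_def by auto
  show "verts ?S \<subseteq> verts H" using e adj_wf[OF wf] by (auto simp: verts_def)
  show "edges ?S \<subseteq> edges H" using e by (auto simp: edges_def adj_def)
  show "\<not> near_bipartite ?S"
  proof
    assume "near_bipartite ?S"
    then obtain I F where "nb_coloring ?S I F" unfolding near_bipartite_def by blast
    note n = nbI[OF this]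
    have d': "distinct [z,e,d,c,b,a]" using d by auto
    have c: "is_cycle ?S [z,a,b]" "is_cycle ?S [z,b,c]" "is_cycle ?S [z,c,d]" "is_cycle ?S [z,d,e]"
       "is_cycle ?S [z,e,a]" "is_cycle ?S [a,b,c,d,e]"
      using d d' by (simp_all add: is_cycle3 is_cycle5 adj_def verts_def edges_def doubleton_eq_iff)
    have ad: "adj ?S a b" "adj ?S b c" "adj ?S c d" "adj ?S d e" "adj ?S e a"
       "adj ?S z a" "adj ?S z b" "adj ?S z c" "adj ?S z d" "adj ?S z e"
      by (auto simp: adj_def edges_def)
    have v: "a \<in> verts ?S" "b \<in> verts ?S" "c \<in> verts ?S" "d \<in> verts ?S" "e \<in> verts ?S" "z \<in> verts ?S"
      by (auto simp: verts_def)
    have c2: "\<not> (z \<in> F \<and> a \<in> F \<and> b \<in> F)" "\<not> (z \<in> F \<and> b \<in> F \<and> c \<in> F)"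
       "\<not> (z \<in> F \<and> c \<in> F \<and> d \<in> F)" "\<not> (z \<in> F \<and> d \<in> F \<and> e \<in> F)"
       "\<not> (z \<in> F \<and> e \<in> F \<and> a \<in> F)" "\<not> (a \<in> F \<and> b \<in> F \<and> c \<in> F \<and> d \<in> F \<and> e \<in> F)"
      using n c by auto
    have i2: "\<not>(a \<in> I \<and> b \<in> I)" "\<not>(b \<in> I \<and> c \<in> I)" "\<not>(c \<in> I \<and> d \<in> I)"
      "\<not>(d \<in> I \<and> e \<in> I)" "\<not>(e \<in> I \<and> a \<in> I)" "\<not>(z \<in> I \<and> a \<in> I)" "\<not>(z \<in> I \<and> b \<in> I)"
      "\<not>(z \<in> I \<and> c \<in> I)" "\<not>(z \<in> I \<and> d \<in> I)" "\<not>(z \<in> I \<and> e \<in> I)"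
      using n ad by blast+
    have v2: "a \<in> I \<or> a \<in> F" "b \<in> I \<or> b \<in> F" "c \<in> I \<or> c \<in> F" "d \<in> I \<or> d \<in> F"
       "e \<in> I \<or> e \<in> F" "z \<in> I \<or> z \<in> F"
      using n v by blast+
    show False using c2 i2 v2 by argo
  qed
qed

lemma wf_img0: "\<forall>(a,b)\<in>set es. a \<in> V \<and> b \<in> V \<Longrightarrow> \<forall>e\<in>(\<lambda>(a,b). {a,b}) ` set es. \<exists>a b. e = {a,b} \<and> a \<in> V \<and> b \<in> V"
  by (auto; blast)

lemma iso_card: "graph_iso G H \<Longrightarrow> card (verts G) = card (verts H)"
  unfolding graph_iso_def using bij_betw_same_card by blast

lemma card_K4: "card (verts K4) = 4" by (simp add: K4_def mk_graph_def verts_def)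
lemma card_W5: "card (verts W5) = 6" by (simp add: W5_def mk_graph_def verts_def)
lemma card_J7: "card (verts J7) = 7" by (simp add: J7_def mk_graph_def verts_def)
lemma card_J12: "card (verts J12) = 12" by (simp add: J12_def mk_graph_def verts_def)

lemma K4_complete: "a \<in> verts K4 \<Longrightarrow> b \<in> verts K4 \<Longrightarrow> a \<noteq> b \<Longrightarrow> {a,b} \<in> edges K4"
proof -
  assume h: "a \<in> verts K4" "b \<in> verts K4" "a \<noteq> b"
  then have "a \<in> {0,1,2,3}" "b \<in> {0,1,2,3}" by (auto simp: K4_def mk_graph_def verts_def)
  then show ?thesis using h(3) by (auto simp: K4_def mk_graph_def edges_def insert_commute)
qed

lemma iso_K4_complete:
  assumes "graph_iso H K4" "u \<in> verts H" "v \<in> verts H" "u \<noteq> v"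
  shows "{u,v} \<in> edges H"
proof -
  obtain f where f: "bij_betw f (verts H) (verts K4)"
    "\<forall>u\<in>verts H. \<forall>v\<in>verts H. {u, v} \<in> edges H \<longleftrightarrow> {f u, f v} \<in> edges K4"
    using assms(1) unfolding graph_iso_def by blast
  have "f u \<noteq> f v" using f(1) assms(2-4) by (metis bij_betw_inv_into_left)
  moreover have "f u \<in> verts K4" "f v \<in> verts K4" using f(1) assms(2,3) by (auto dest: bij_betwE)
  ultimately have "{f u, f v} \<in> edges K4" using K4_complete by blast
  then show ?thesis using f(2) assms(2,3) by blast
qed

lemma K4_iso:
  assumes "H = ({a,b,c,d}, {{a,b},{a,c},{a,d},{b,c},{b,d},{c,d}})" "distinct [a,b,c,d]"
  shows "graph_iso H K4"
proof (rule iso_from_map[where g = "(!) [a,b,c,d]"])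
  show "bij_betw ((!) [a,b,c,d]) (verts K4) (verts H)"
    by (rule bij_betw_nth) (use assms in \<open>auto simp: K4_def mk_graph_def verts_def\<close>)
  show "\<forall>e\<in>edges K4. \<exists>a b. e = {a, b} \<and> a \<in> verts K4 \<and> b \<in> verts K4"
    unfolding K4_def mk_graph_def verts_def edges_def fst_conv snd_conv by (rule wf_img0) simp
  show "edges H = (\<lambda>e. (!) [a,b,c,d] ` e) ` edges K4"
    using assms(1) by (simp add: K4_def mk_graph_def edges_def)
qed

lemma W5_iso:
  assumes "H = ({a,b,c,d,e,z}, {{a,b},{b,c},{c,d},{d,e},{e,a},{z,a},{z,b},{z,c},{z,d},{z,e}})"
    "distinct [a,b,c,d,e,z]"
  shows "graph_iso H W5"
proof (rule iso_from_map[where g = "(!) [a,b,c,d,e,z]"])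
  show "bij_betw ((!) [a,b,c,d,e,z]) (verts W5) (verts H)"
    by (rule bij_betw_nth) (use assms in \<open>auto simp: W5_def mk_graph_def verts_def\<close>)
  show "\<forall>e\<in>edges W5. \<exists>a b. e = {a, b} \<and> a \<in> verts W5 \<and> b \<in> verts W5"
    unfolding W5_def mk_graph_def verts_def edges_def fst_conv snd_conv by (rule wf_img0) simp
  show "edges H = (\<lambda>E. (!) [a,b,c,d,e,z] ` E) ` edges W5"
    using assms(1) by (simp add: W5_def mk_graph_def edges_def)
qed

lemma wf_img: "\<forall>(a,b)\<in>set es. a \<in> V \<and> b \<in> V \<Longrightarrow> \<forall>e\<in>(\<lambda>(a,b). {a,b}) ` set es. \<exists>a b. e = {a,b} \<and> a \<in> V \<and> b \<in> V"
  by (auto; blast)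

lemma int17: "{1..7::nat} = {1,2,3,4,5,6,7}" by (auto simp: eval_nat_numeral le_Suc_eq)

lemma M7_iso:
  assumes "edges H = {{u,b},{b,c},{c,w},{w,p},{p,u},{a,u},{a,b},{a,c},{q,u},{q,w},{q,p}}"
    "verts H = {a,b,c,u,w,p,q}" "distinct [a,b,c,u,w,p,q]"
  shows "graph_iso H M7"
proof (rule iso_from_map[where g = "(!) [u,b,c,w,p,a,q] \<circ> (\<lambda>i. i - 1)"])
  have b1: "bij_betw (\<lambda>i::nat. i - 1) {1..7} {..<7}"
    by (rule bij_betw_byWitness[where f' = Suc]) auto
  have b2: "bij_betw ((!) [u,b,c,w,p,a,q]) {..<7} (verts H)"
    by (rule bij_betw_nth) (use assms in auto)
  show "bij_betw ((!) [u,b,c,w,p,a,q] \<circ> (\<lambda>i. i - 1)) (verts M7) (verts H)"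
    using bij_betw_trans[OF b1 b2] by (simp add: M7_def verts_def)
  show "\<forall>e\<in>edges M7. \<exists>a b. e = {a, b} \<and> a \<in> verts M7 \<and> b \<in> verts M7"
    unfolding M7_def verts_def edges_def fst_conv snd_conv by (rule wf_img0) simp
  show "edges H = (\<lambda>e. ((!) [u,b,c,w,p,a,q] \<circ> (\<lambda>i. i - 1)) ` e) ` edges M7"
    using assms(1) by (simp add: M7_def edges_def)
qed

lemma adj_symI: "adj G u v \<Longrightarrow> adj G v u" by (simp add: adj_def insert_commute)


lemma nb3:
  assumes wf: "wf_graph H" and deg: "degree H x = 3" and a: "adj H x a" and b: "adj H x b" and ab: "a \<noteq> b"
  shows "\<exists>z. nbhd H x = {a,b,z} \<and> z \<noteq> a \<and> z \<noteq> b \<and> z \<noteq> x \<and> adj H x z \<and> z \<in> verts H"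
proof -
  have c: "card (nbhd H x) = 3" using deg by (simp add: degree_def)
  have ia: "a \<in> nbhd H x" using a by (simp add: nbhd_def)
  have ib: "b \<in> nbhd H x" using b by (simp add: nbhd_def)
  obtain z where z: "nbhd H x = {a,b,z}" "z \<noteq> a" "z \<noteq> b" using card3[OF c ia ib ab] by blast
  have "z \<in> nbhd H x" using z(1) by simp
  then have az: "adj H x z" by (simp add: nbhd_def)
  have "z \<in> verts H" "z \<noteq> x" using adj_wf[OF wf az] by auto
  then show ?thesis using z az by (intro exI[of _ z]) simp
qed

lemma len3: "length xs = 3 \<Longrightarrow> \<exists>a b c. xs = [a,b,c]"
  by (auto simp: numeral_eq_Suc length_Suc_conv)
lemma len5: "length xs = 5 \<Longrightarrow> \<exists>a b c d e. xs = [a,b,c,d,e]"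
  by (auto simp: numeral_eq_Suc length_Suc_conv)

lemma tri_setup:
  assumes wf: "wf_graph H" and cyc: "is_cycle H xs" and len: "length xs = 3"
    and deg: "\<forall>x\<in>set xs. degree H x = 3"
  obtains x0 x1 x2 z0 z1 z2 where "xs = [x0,x1,x2]" "distinct [x0,x1,x2]" "{x0,x1,x2} \<subseteq> verts H"
    "adj H x0 x1" "adj H x1 x2" "adj H x2 x0"
    "nbhd H x0 = {x2,x1,z0}" "nbhd H x1 = {x0,x2,z1}" "nbhd H x2 = {x1,x0,z2}"
    "z0 \<notin> {x0,x1,x2}" "z1 \<notin> {x0,x1,x2}" "z2 \<notin> {x0,x1,x2}"
    "z0 \<in> verts H" "z1 \<in> verts H" "z2 \<in> verts H"
    "adj H x0 z0" "adj H x1 z1" "adj H x2 z2"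
proof -
  obtain x0 x1 x2 where xs: "xs = [x0,x1,x2]" using len3[OF len] by blast
  have c: "distinct [x0,x1,x2]" "{x0,x1,x2} \<subseteq> verts H" "adj H x0 x1" "adj H x1 x2" "adj H x2 x0"
    using cyc unfolding xs is_cycle3 by auto
  note s = adj_symI[OF c(3)] adj_symI[OF c(4)] adj_symI[OF c(5)]
  obtain z0 where z0: "nbhd H x0 = {x2,x1,z0}" "z0 \<noteq> x2" "z0 \<noteq> x1" "z0 \<noteq> x0" "adj H x0 z0" "z0 \<in> verts H"
    using nb3[OF wf _ s(3) c(3)] deg c(1) xs by auto
  obtain z1 where z1: "nbhd H x1 = {x0,x2,z1}" "z1 \<noteq> x0" "z1 \<noteq> x2" "z1 \<noteq> x1" "adj H x1 z1" "z1 \<in> verts H"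
    using nb3[OF wf _ s(1) c(4)] deg c(1) xs by auto
  obtain z2 where z2: "nbhd H x2 = {x1,x0,z2}" "z2 \<noteq> x1" "z2 \<noteq> x0" "z2 \<noteq> x2" "adj H x2 z2" "z2 \<in> verts H"
    using nb3[OF wf _ s(2) c(5)] deg c(1) xs by auto
  have n: "z0 \<notin> {x0,x1,x2}" "z1 \<notin> {x0,x1,x2}" "z2 \<notin> {x0,x1,x2}"
    using z0(2-4) z1(2-4) z2(2-4) by simp_all
  show ?thesis
    by (rule that[OF xs c z0(1) z1(1) z2(1) n z0(6) z1(6) z2(6) z0(5) z1(5) z2(5)])
qed

lemma pent_setup:
  assumes wf: "wf_graph H" and cyc: "is_cycle H xs" and len: "length xs = 5"
    and deg: "\<forall>x\<in>set xs. degree H x = 3"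
  obtains x0 x1 x2 x3 x4 z0 z1 z2 z3 z4 where "xs = [x0,x1,x2,x3,x4]" "distinct [x0,x1,x2,x3,x4]"
    "{x0,x1,x2,x3,x4} \<subseteq> verts H"
    "adj H x0 x1" "adj H x1 x2" "adj H x2 x3" "adj H x3 x4" "adj H x4 x0"
    "nbhd H x0 = {x4,x1,z0}" "nbhd H x1 = {x0,x2,z1}" "nbhd H x2 = {x1,x3,z2}"
    "nbhd H x3 = {x2,x4,z3}" "nbhd H x4 = {x3,x0,z4}"
    "z0 \<noteq> x0" "z1 \<noteq> x1" "z2 \<noteq> x2" "z3 \<noteq> x3" "z4 \<noteq> x4"
    "adj H z0 x0" "adj H z1 x1" "adj H z2 x2" "adj H z3 x3" "adj H z4 x4"
proof -
  obtain x0 x1 x2 x3 x4 where xs: "xs = [x0,x1,x2,x3,x4]" using len5[OF len] by blast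
  have c: "distinct [x0,x1,x2,x3,x4]" "{x0,x1,x2,x3,x4} \<subseteq> verts H" "adj H x0 x1" "adj H x1 x2"
     "adj H x2 x3" "adj H x3 x4" "adj H x4 x0"
    using cyc unfolding xs is_cycle5 by auto
  note s = adj_symI[OF c(3)] adj_symI[OF c(4)] adj_symI[OF c(5)] adj_symI[OF c(6)] adj_symI[OF c(7)]
  obtain z0 where z0: "nbhd H x0 = {x4,x1,z0}" "z0 \<noteq> x0" "adj H x0 z0"
    using nb3[OF wf _ s(5) c(3)] deg c(1) xs by auto
  obtain z1 where z1: "nbhd H x1 = {x0,x2,z1}" "z1 \<noteq> x1" "adj H x1 z1"
    using nb3[OF wf _ s(1) c(4)] deg c(1) xs by auto
  obtain z2 where z2: "nbhd H x2 = {x1,x3,z2}" "z2 \<noteq> x2" "adj H x2 z2"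
    using nb3[OF wf _ s(2) c(5)] deg c(1) xs by auto
  obtain z3 where z3: "nbhd H x3 = {x2,x4,z3}" "z3 \<noteq> x3" "adj H x3 z3"
    using nb3[OF wf _ s(3) c(6)] deg c(1) xs by auto
  obtain z4 where z4: "nbhd H x4 = {x3,x0,z4}" "z4 \<noteq> x4" "adj H x4 z4"
    using nb3[OF wf _ s(4) c(7)] deg c(1) xs by auto
  note zs = adj_symI[OF z0(3)] adj_symI[OF z1(3)] adj_symI[OF z2(3)] adj_symI[OF z3(3)] adj_symI[OF z4(3)]
  show ?thesis
    by (rule that[OF xs c z0(1) z1(1) z2(1) z3(1) z4(1) z0(2) z1(2) z2(2) z3(2) z4(2) zs])
qed

lemma embed_card:
  assumes wf: "wf_graph H" and C: "C \<subseteq> verts H"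
    and emb: "embeds_via f (delete_edge H0 e) (delete_vertices H C)"
  shows "card C + card (verts H0) \<le> card (verts H)"
proof -
  have fin: "finite (verts H)" using wf wf_graph_def by blast
  have inj: "inj_on f (verts H0)" and sub: "f ` verts H0 \<subseteq> verts H - C"
    using emb by (auto simp: embeds_via_def delete_edge_def delete_vertices_def verts_def)
  have "card (verts H0) = card (f ` verts H0)" using inj by (simp add: card_image)
  also have "\<dots> \<le> card (verts H - C)" using sub fin by (simp add: card_mono)
  also have "\<dots> = card (verts H) - card C" using C fin by (simp add: card_Diff_subset finite_subset)
  finally show ?thesis using card_mono[OF fin C] by linarith
qed

lemma hp_basic:
  assumes "H \<in> Hp"
  shows "wf_graph H \<and> 4 \<le> card (verts H) \<and>
    (card (verts H) \<le> 4 \<longrightarrow> (\<forall>u\<in>verts H. \<forall>v\<in>verts H. u \<noteq> v \<longrightarrow> {u,v} \<in> edges H))"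
  using assms
proof cases
  case base
  from base(2) have "graph_iso H K4 \<or> graph_iso H W5 \<or> graph_iso H J7 \<or> graph_iso H J12"
    by (simp add: base_graph_def)
  then show ?thesis
  proof (elim disjE)
    assume i: "graph_iso H K4"
    then show ?thesis using base(1) iso_card[OF i] card_K4 iso_K4_complete[OF i] by auto
  next
    assume i: "graph_iso H W5"
    then show ?thesis using base(1) iso_card[OF i] card_W5 by auto
  next
    assume i: "graph_iso H J7"
    then show ?thesis using base(1) iso_card[OF i] card_J7 by auto
  next
    assume i: "graph_iso H J12"
    then show ?thesis using base(1) iso_card[OF i] card_J12 by auto
  qed
next
  case (step xs)
  have wf: "wf_graph H" using step(1) nb_critical_def by blast
  have fin: "finite (verts H)" using wf wf_graph_def by blast
  have cyc: "is_cycle H xs" using step(2) induced_cycle_def by blast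
  from step(3) have "length xs = 3 \<or> length xs = 5" by simp
  then show ?thesis
  proof
    assume l3: "length xs = 3"
    obtain x0 x1 x2 z0 z1 z2 where xs: "xs = [x0,x1,x2]" and d: "distinct [x0,x1,x2]"
      and sv: "{x0,x1,x2} \<subseteq> verts H"
      and a: "adj H x0 x1" "adj H x1 x2" "adj H x2 x0"
      and nbs: "nbhd H x0 = {x2,x1,z0}" "nbhd H x1 = {x0,x2,z1}" "nbhd H x2 = {x1,x0,z2}"
      and nz: "z0 \<notin> {x0,x1,x2}" "z1 \<notin> {x0,x1,x2}" "z2 \<notin> {x0,x1,x2}"
      and zv: "z0 \<in> verts H" "z1 \<in> verts H" "z2 \<in> verts H"
      and az: "adj H x0 z0" "adj H x1 z1" "adj H x2 z2"
      by (rule tri_setup[OF wf cyc l3 step(4)])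
    have sub: "{x0,x1,x2,z0} \<subseteq> verts H" using sv zv by simp
    have c4: "card {x0,x1,x2,z0} = 4" using d nz by auto
    have ge: "4 \<le> card (verts H)" using card_mono[OF fin sub] c4 by simp
    have "(\<forall>u\<in>verts H. \<forall>v\<in>verts H. u \<noteq> v \<longrightarrow> {u,v} \<in> edges H)" if le: "card (verts H) \<le> 4"
    proof -
      have V: "{x0,x1,x2,z0} = verts H" using card_seteq[OF fin sub] le c4 by simp
      have "z1 = z0" "z2 = z0" using zv(2,3) nz(2,3) V by auto
      then have E: "{x0,x1} \<in> edges H" "{x1,x2} \<in> edges H" "{x2,x0} \<in> edges H"
        "{x0,z0} \<in> edges H" "{x1,z0} \<in> edges H" "{x2,z0} \<in> edges H"
        using a az by (simp_all add: adj_def)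
      show ?thesis unfolding V[symmetric] using E by (auto simp: insert_commute)
    qed
    then show ?thesis using wf ge by blast
  next
    assume l5: "length xs = 5"
    have "card (set xs) = 5" using cyc l5 by (simp add: is_cycle_def distinct_card)
    moreover have "set xs \<subseteq> verts H" using cyc by (simp add: is_cycle_def)
    ultimately have "5 \<le> card (verts H)" using card_mono[OF fin] by metis
    then show ?thesis using wf by auto
  qed
qed

lemma link:
  assumes crit: "nb_critical H" and le7: "card (verts H) \<le> 7"
    and C: "C \<subseteq> verts H" "card C = 3"
    and ex: "\<exists>H0 v w f. H0 \<in> Hp \<and> {v,w} \<in> edges H0 \<and>
               embeds_via f (delete_edge H0 {v, w}) (delete_vertices H C) \<and> f v = z \<and> f w = z'"
  shows "\<exists>p q. distinct [z,z',p,q] \<and> verts H - C = {z,z',p,q} \<and> adj H z p \<and> adj H z q \<and>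
     adj H z' p \<and> adj H z' q \<and> adj H p q \<and> \<not> adj H z z'"
proof -
  obtain H0 v w f where H0: "H0 \<in> Hp" and vw: "{v,w} \<in> edges H0"
    and emb: "embeds_via f (delete_edge H0 {v, w}) (delete_vertices H C)" and fv: "f v = z" and fw: "f w = z'"
    using ex by blast
  have wf: "wf_graph H" using crit nb_critical_def by blast
  have fin: "finite (verts H)" using wf wf_graph_def by blast
  have hb: "wf_graph H0" "4 \<le> card (verts H0)"
    "card (verts H0) \<le> 4 \<Longrightarrow> (\<forall>u\<in>verts H0. \<forall>v\<in>verts H0. u \<noteq> v \<longrightarrow> {u,v} \<in> edges H0)"
    using hp_basic[OF H0] by blast+
  have "card C + card (verts H0) \<le> card (verts H)" using embed_card[OF wf C(1) emb] .
  then have c4: "card (verts H0) = 4" and c7: "card (verts H) = 7" using hb(2) le7 C(2) by linarith+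
  have comp: "\<And>a b. a \<in> verts H0 \<Longrightarrow> b \<in> verts H0 \<Longrightarrow> a \<noteq> b \<Longrightarrow> {a,b} \<in> edges H0"
    using hb(3) c4 by auto
  have vwv: "v \<in> verts H0" "w \<in> verts H0" "v \<noteq> w" using adj_wf[OF hb(1), of v w] vw by (auto simp: adj_def)
  have fin0: "finite (verts H0)" using hb(1) wf_graph_def by blast
  have "card (verts H0 - {v,w}) = 2" using c4 vwv fin0 by (simp add: card_Diff_subset)
  then obtain p0 q0 where pq: "verts H0 - {v,w} = {p0,q0}" "p0 \<noteq> q0" by (auto simp: card_2_iff)
  have pqv: "p0 \<in> verts H0" "q0 \<in> verts H0" "p0 \<noteq> v" "p0 \<noteq> w" "q0 \<noteq> v" "q0 \<noteq> w"
    using pq(1) by blast+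
  have V0: "verts H0 = {v,w,p0,q0}" using pq(1) vwv by blast
  have inj: "inj_on f (verts H0)" and fsub: "f ` verts H0 \<subseteq> verts H - C"
    and fe: "\<And>a b. {a,b} \<in> edges H0 - {{v,w}} \<Longrightarrow> {f a, f b} \<in> edges H"
    using emb by (auto simp: embeds_via_def delete_edge_def delete_vertices_def verts_def edges_def)
  have E: "\<And>a b. a \<in> verts H0 \<Longrightarrow> b \<in> verts H0 \<Longrightarrow> a \<noteq> b \<Longrightarrow> {a,b} \<noteq> {v,w} \<Longrightarrow> adj H (f a) (f b)"
    using comp fe by (simp add: adj_def)
  have dist: "distinct [f v, f w, f p0, f q0]"
    using inj vwv pqv pq(2) unfolding inj_on_def by auto
  have adjs: "adj H (f v) (f p0)" "adj H (f v) (f q0)" "adj H (f w) (f p0)" "adj H (f w) (f q0)"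
    "adj H (f p0) (f q0)"
    using E vwv pqv pq(2) by (auto simp: doubleton_eq_iff)
  have s4: "{f v, f w, f p0, f q0} \<subseteq> verts H - C" using fsub V0 by auto
  have cR: "card (verts H - C) = 4" using c7 C fin by (simp add: card_Diff_subset finite_subset)
  have c4': "card {f v, f w, f p0, f q0} = 4" using dist by simp
  have R: "verts H - C = {f v, f w, f p0, f q0}"
    using card_seteq[OF _ s4] fin cR c4' by (metis finite_Diff order_refl)
  have na: "\<not> adj H z z'"
  proof
    assume a: "adj H z z'"
    have "H = ({z,z',f p0,f q0}, {{z,z'},{z,f p0},{z,f q0},{z',f p0},{z',f q0},{f p0,f q0}})"
      using K4_sub[OF crit, of z z' "f p0" "f q0"] dist adjs a fv fw by simp
    then have "verts H = {z,z',f p0,f q0}" by (simp add: verts_def)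
    then have "card (verts H) = 4" using c4' fv fw by simp
    then show False using c7 by simp
  qed
  show ?thesis
    apply (rule exI[of _ "f p0"], rule exI[of _ "f q0"])
    using dist R adjs na fv fw by simp
qed


lemma M7_case:
  assumes wf: "wf_graph H" and VC: "verts H - {a,b,c} = {u,w,p,q}" and abc: "{a,b,c} \<subseteq> verts H"
    and d1: "distinct [a,b,c]" and d2: "distinct [u,w,p,q]"
    and na: "nbhd H a = {b,c,u}" and nb: "nbhd H b = {a,c,u}" and nc: "nbhd H c = {a,b,w}"
    and e: "adj H u p" "adj H u q" "adj H w p" "adj H w q" "adj H p q" "\<not> adj H u w"
  shows "graph_iso H M7"
proof -
  have d: "distinct [a,b,c,u,w,p,q]" using VC d1 d2 by auto
  have V: "verts H = {a,b,c,u,w,p,q}" using VC abc by auto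
  have A: "\<And>t. adj H a t \<longleftrightarrow> t \<in> {b,c,u}" "\<And>t. adj H b t \<longleftrightarrow> t \<in> {a,c,u}"
    "\<And>t. adj H c t \<longleftrightarrow> t \<in> {a,b,w}"
    using na nb nc by (auto simp: nbhd_def set_eq_iff)
  have A': "\<And>t. adj H t a \<longleftrightarrow> t \<in> {b,c,u}" "\<And>t. adj H t b \<longleftrightarrow> t \<in> {a,c,u}"
    "\<And>t. adj H t c \<longleftrightarrow> t \<in> {a,b,w}"
    using A by (simp_all add: adj_sym[of H _ a] adj_sym[of H _ b] adj_sym[of H _ c])
  have nuw: "\<not> adj H w u" using e(6) by (simp add: adj_sym[of H w u])
  let ?E = "{{u,b},{b,c},{c,w},{w,p},{p,u},{a,u},{a,b},{a,c},{q,u},{q,w},{q,p}}"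
  have sw: "{b,a} = {a,b}" "{c,a} = {a,c}" "{c,b} = {b,c}" "{u,a} = {a,u}" "{b,u} = {u,b}"
    "{w,c} = {c,w}" "{p,w} = {w,p}" "{u,p} = {p,u}" "{u,q} = {q,u}" "{w,q} = {q,w}" "{p,q} = {q,p}"
    by (simp_all add: insert_commute)
  have key: "{s,t} \<in> ?E" if ast: "adj H s t" and sV: "s \<in> {a,b,c,u,w,p,q}" and tV: "t \<in> {a,b,c,u,w,p,q}"
    and st: "s \<noteq> t" for s t
  proof -
    consider "s = a" | "s = b" | "s = c" | "t = a" | "t = b" | "t = c" | "s \<in> {u,w,p,q}" "t \<in> {u,w,p,q}"
      using sV tV by auto
    then show ?thesis
    proof cases
      case 1 then have "t = b \<or> t = c \<or> t = u" using A(1) ast by auto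
      then show ?thesis using 1 by (elim disjE; simp add: sw)
    next
      case 2 then have "t = a \<or> t = c \<or> t = u" using A(2) ast by auto
      then show ?thesis using 2 by (elim disjE; simp add: sw)
    next
      case 3 then have "t = a \<or> t = b \<or> t = w" using A(3) ast by auto
      then show ?thesis using 3 by (elim disjE; simp add: sw)
    next
      case 4 then have "s = b \<or> s = c \<or> s = u" using A'(1) ast by auto
      then show ?thesis using 4 by (elim disjE; simp add: sw)
    next
      case 5 then have "s = a \<or> s = c \<or> s = u" using A'(2) ast by auto
      then show ?thesis using 5 by (elim disjE; simp add: sw)
    next
      case 6 then have "s = a \<or> s = b \<or> s = w" using A'(3) ast by auto
      then show ?thesis using 6 by (elim disjE; simp add: sw)
    next
      case 7
      have nn: "\<not> (s = u \<and> t = w)" "\<not> (s = w \<and> t = u)" using ast e(6) nuw by auto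
      have sc: "s = u \<or> s = w \<or> s = p \<or> s = q" "t = u \<or> t = w \<or> t = p \<or> t = q" using 7 by auto
      show ?thesis using sc st nn by (elim disjE; simp add: sw)
    qed
  qed
  have "edges H = ?E"
  proof
    show "edges H \<subseteq> ?E"
    proof
      fix e' assume e': "e' \<in> edges H"
      then obtain s t where st: "e' = {s,t}" "s \<noteq> t" "s \<in> verts H" "t \<in> verts H"
        using wf unfolding wf_graph_def by blast
      have ast: "adj H s t" using e' st by (simp add: adj_def)
      show "e' \<in> ?E" using key[OF ast] st V by simp
    qed
  next
    have "adj H u b" "adj H b c" "adj H c w" "adj H w p" "adj H p u" "adj H a u" "adj H a b"
      "adj H a c" "adj H q u" "adj H q w" "adj H q p"
      using A A' e by (auto simp: adj_sym[of H p u] adj_sym[of H q u] adj_sym[of H q w] adj_sym[of H q p])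
    then show "?E \<subseteq> edges H" by (simp add: adj_def)
  qed
  then show ?thesis by (rule M7_iso[OF _ V d])
qed

theorem lemma3p7:
  fixes H :: "nat ugraph"
  assumes "H \<in> Hp"
    and "\<not> graph_iso H K4" and "\<not> graph_iso H W5"
    and "\<not> graph_iso H M7" and "\<not> graph_iso H J7"
  shows "card (verts H) \<ge> 8"
proof (rule ccontr)
  assume "\<not> card (verts H) \<ge> 8"
  then have le7: "card (verts H) \<le> 7" by simp
  from assms(1) show False
  proof cases
    case base
    from base(2) have "graph_iso H K4 \<or> graph_iso H W5 \<or> graph_iso H J7 \<or> graph_iso H J12"
      by (simp add: base_graph_def)
    then have "graph_iso H J12" using assms(2-5) by blast
    then have "card (verts H) = 12" using iso_card card_J12 by metis
    then show False using le7 by simp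
  next
    case (step xs)
    have crit: "nb_critical H" using step(1) .
    have wf: "wf_graph H" using step(1) nb_critical_def by blast
    have fin: "finite (verts H)" using wf wf_graph_def by blast
    have cyc: "is_cycle H xs" using step(2) induced_cycle_def by blast
    note cond = step(5)[rule_format]
    from step(3) have "length xs = 3 \<or> length xs = 5" by simp
    then show False
    proof
      assume l3: "length xs = 3"
      obtain x0 x1 x2 z0 z1 z2 where xs: "xs = [x0,x1,x2]" and d: "distinct [x0,x1,x2]"
        and sv: "{x0,x1,x2} \<subseteq> verts H"
        and a: "adj H x0 x1" "adj H x1 x2" "adj H x2 x0"
        and nbs: "nbhd H x0 = {x2,x1,z0}" "nbhd H x1 = {x0,x2,z1}" "nbhd H x2 = {x1,x0,z2}"
        and nz: "z0 \<notin> {x0,x1,x2}" "z1 \<notin> {x0,x1,x2}" "z2 \<notin> {x0,x1,x2}"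
        and zv: "z0 \<in> verts H" "z1 \<in> verts H" "z2 \<in> verts H"
        and az: "adj H x0 z0" "adj H x1 z1" "adj H x2 z2"
        by (rule tri_setup[OF wf cyc l3 step(4)])
      let ?C = "{x0,x1,x2}"
      have sxs: "set xs = ?C" using xs by simp
      have cC: "card ?C = 3" using d by simp
      have e0: "\<exists>H0 v w f. H0 \<in> Hp \<and> {v,w} \<in> edges H0 \<and>
               embeds_via f (delete_edge H0 {v, w}) (delete_vertices H ?C) \<and> f v = z0 \<and> f w = z1"
        if "z0 \<noteq> z1"
        using cond[of 0 z0 z1] that nbs xs by (simp add: Let_def)
      have e1: "\<exists>H0 v w f. H0 \<in> Hp \<and> {v,w} \<in> edges H0 \<and>
               embeds_via f (delete_edge H0 {v, w}) (delete_vertices H ?C) \<and> f v = z1 \<and> f w = z2"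
        if "z1 \<noteq> z2"
        using cond[of 1 z1 z2] that nbs xs by (simp add: Let_def)
      have e2: "\<exists>H0 v w f. H0 \<in> Hp \<and> {v,w} \<in> edges H0 \<and>
               embeds_via f (delete_edge H0 {v, w}) (delete_vertices H ?C) \<and> f v = z2 \<and> f w = z0"
        if "z2 \<noteq> z0"
        using cond[of 2 z2 z0] that nbs xs by (simp add: Let_def)
      note R0 = link[OF crit le7 sv cC e0]
      note R1 = link[OF crit le7 sv cC e1]
      note R2 = link[OF crit le7 sv cC e2]
      have s: "adj H x1 x0" "adj H x2 x1" "adj H x0 x2" using a by (simp_all add: adj_sym)
      have zs: "adj H z0 x0" "adj H z1 x1" "adj H z2 x2" using az by (simp_all add: adj_sym)
      have zR: "z0 \<in> verts H - ?C" "z1 \<in> verts H - ?C" "z2 \<in> verts H - ?C" using zv nz by auto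
      have nA: "\<not> (z0 = z1 \<and> z1 = z2)"
      proof
        assume h: "z0 = z1 \<and> z1 = z2"
        have dd: "distinct [x0,x1,x2,z0]" using d nz by auto
        have az': "adj H x1 z0" "adj H x2 z0" using az h by simp_all
        have "H = ({x0,x1,x2,z0}, {{x0,x1},{x0,x2},{x0,z0},{x1,x2},{x1,z0},{x2,z0}})"
          by (rule K4_sub[OF crit dd a(1) s(3) az(1) a(2) az'])
        then have "graph_iso H K4" by (rule K4_iso[OF _ dd])
        then show False using assms(2) by blast
      qed
      have M: "graph_iso H M7" if ne: "z \<noteq> z'" and ab: "{a',b',c'} = ?C" and dabc: "distinct [a',b',c']"
        and na: "nbhd H a' = {b',c',z}" and nb: "nbhd H b' = {a',c',z}" and nc: "nbhd H c' = {a',b',z'}"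
        and ex: "\<exists>p q. distinct [z,z',p,q] \<and> verts H - ?C = {z,z',p,q} \<and> adj H z p \<and> adj H z q \<and>
            adj H z' p \<and> adj H z' q \<and> adj H p q \<and> \<not> adj H z z'"
        for a' b' c' z z'
      proof -
        from ex obtain p q where pq: "distinct [z,z',p,q] \<and> verts H - ?C = {z,z',p,q} \<and> adj H z p \<and> adj H z q \<and>
            adj H z' p \<and> adj H z' q \<and> adj H p q \<and> \<not> adj H z z'" by (elim exE)
        then have pq1: "distinct [z,z',p,q]" and pq2: "verts H - ?C = {z,z',p,q}"
          and pq3: "adj H z p" "adj H z q" "adj H z' p" "adj H z' q" "adj H p q" "\<not> adj H z z'"
          by simp_all
        have v1: "verts H - {a',b',c'} = {z,z',p,q}" using pq2 ab by simp
        have v2: "{a',b',c'} \<subseteq> verts H" using ab sv by simp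
        show ?thesis
          by (rule M7_case[OF wf v1 v2 dabc pq1 na nb nc pq3])
      qed
      have nB: "\<not> (z0 = z1 \<and> z1 \<noteq> z2)"
      proof
        assume h: "z0 = z1 \<and> z1 \<noteq> z2"
        then have ne: "z1 \<noteq> z2" by simp
        have "nbhd H x0 = {x1,x2,z1}" using nbs(1) h by auto
        from M[OF ne _ d this _ _ R1[OF ne]] have "graph_iso H M7" using nbs by auto
        then show False using assms(4) by blast
      qed
      have nC: "\<not> (z1 = z2 \<and> z2 \<noteq> z0)"
      proof
        assume h: "z1 = z2 \<and> z2 \<noteq> z0"
        then have ne: "z2 \<noteq> z0" by simp
        have dd: "distinct [x1,x2,x0]" using d by auto
        have n1: "nbhd H x1 = {x2,x0,z2}" "nbhd H x2 = {x1,x0,z2}" "nbhd H x0 = {x1,x2,z0}"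
          using nbs h by auto
        have ab: "{x1,x2,x0} = ?C" by auto
        from M[OF ne ab dd n1 R2[OF ne]] have "graph_iso H M7" .
        then show False using assms(4) by blast
      qed
      have nD: "\<not> (z2 = z0 \<and> z0 \<noteq> z1)"
      proof
        assume h: "z2 = z0 \<and> z0 \<noteq> z1"
        then have ne: "z0 \<noteq> z1" by simp
        have dd: "distinct [x2,x0,x1]" using d by auto
        have n1: "nbhd H x2 = {x0,x1,z0}" "nbhd H x0 = {x2,x1,z0}" "nbhd H x1 = {x2,x0,z1}"
          using nbs h by auto
        have ab: "{x2,x0,x1} = ?C" by auto
        from M[OF ne ab dd n1 R0[OF ne]] have "graph_iso H M7" .
        then show False using assms(4) by blast
      qed
      have nE: "\<not> (z0 \<noteq> z1 \<and> z1 \<noteq> z2 \<and> z2 \<noteq> z0)"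
      proof
        assume h: "z0 \<noteq> z1 \<and> z1 \<noteq> z2 \<and> z2 \<noteq> z0"
        then have ne0: "z0 \<noteq> z1" and ne2: "z2 \<noteq> z0" by simp_all
        from R0[OF ne0] obtain p q where pq: "distinct [z0,z1,p,q] \<and> verts H - ?C = {z0,z1,p,q} \<and> adj H z0 p \<and> adj H z0 q \<and>
            adj H z1 p \<and> adj H z1 q \<and> adj H p q \<and> \<not> adj H z0 z1" by (elim exE)
        then have pq1: "verts H - ?C = {z0,z1,p,q}" and pq2: "adj H z0 p" "adj H z0 q" by simp_all
        have "z2 = p \<or> z2 = q" using zR(3) pq1 h by auto
        then have "adj H z0 z2" using pq2 by auto
        moreover have "\<not> adj H z2 z0" using R2[OF ne2] by (elim exE) simp
        ultimately show False by (simp add: adj_sym)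
      qed
      show False using nA nB nC nD nE by blast
    next
      assume l5: "length xs = 5"
      obtain x0 x1 x2 x3 x4 z0 z1 z2 z3 z4 where xs: "xs = [x0,x1,x2,x3,x4]"
        and d: "distinct [x0,x1,x2,x3,x4]" and sv: "{x0,x1,x2,x3,x4} \<subseteq> verts H"
        and a: "adj H x0 x1" "adj H x1 x2" "adj H x2 x3" "adj H x3 x4" "adj H x4 x0"
        and nbs: "nbhd H x0 = {x4,x1,z0}" "nbhd H x1 = {x0,x2,z1}" "nbhd H x2 = {x1,x3,z2}"
          "nbhd H x3 = {x2,x4,z3}" "nbhd H x4 = {x3,x0,z4}"
        and nz: "z0 \<noteq> x0" "z1 \<noteq> x1" "z2 \<noteq> x2" "z3 \<noteq> x3" "z4 \<noteq> x4"
        and az: "adj H z0 x0" "adj H z1 x1" "adj H z2 x2" "adj H z3 x3" "adj H z4 x4"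
        by (rule pent_setup[OF wf cyc l5 step(4)])
      let ?C = "{x0,x1,x2,x3,x4}"
      have c5: "card ?C = 5" using d by simp
      have big: False if ex: "\<exists>H0 v w f. H0 \<in> Hp \<and> {v,w} \<in> edges H0 \<and>
               embeds_via f (delete_edge H0 {v, w}) (delete_vertices H ?C) \<and> f v = z \<and> f w = z'"
        for z z'
      proof -
        from ex obtain H0 v w f where H0: "H0 \<in> Hp \<and> {v,w} \<in> edges H0 \<and>
               embeds_via f (delete_edge H0 {v, w}) (delete_vertices H ?C) \<and> f v = z \<and> f w = z'"
          by (elim exE)
        then have H0': "H0 \<in> Hp" and emb: "embeds_via f (delete_edge H0 {v, w}) (delete_vertices H ?C)"
          by simp_all
        have "4 \<le> card (verts H0)" using hp_basic[OF H0'] by simp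
        moreover have "card ?C + card (verts H0) \<le> card (verts H)" using embed_card[OF wf sv emb] .
        ultimately show False using c5 le7 by linarith
      qed
      have q01: "z0 = z1"
      proof (rule ccontr)
        assume ne: "z0 \<noteq> z1"
        show False using cond[of 0 z0 z1] ne nbs xs big[of z0 z1] by (simp add: Let_def)
      qed
      have q12: "z1 = z2"
      proof (rule ccontr)
        assume ne: "z1 \<noteq> z2"
        show False using cond[of 1 z1 z2] ne nbs xs big[of z1 z2] by (simp add: Let_def)
      qed
      have q23: "z2 = z3"
      proof (rule ccontr)
        assume ne: "z2 \<noteq> z3"
        show False using cond[of 2 z2 z3] ne nbs xs big[of z2 z3] by (simp add: Let_def)
      qed
      have q34: "z3 = z4"
      proof (rule ccontr)
        assume ne: "z3 \<noteq> z4"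
        show False using cond[of 3 z3 z4] ne nbs xs big[of z3 z4] by (simp add: Let_def)
      qed
      have dd: "distinct [x0,x1,x2,x3,x4,z0]" using d nz q01 q12 q23 q34 by auto
      have az': "adj H z0 x1" "adj H z0 x2" "adj H z0 x3" "adj H z0 x4"
        using az q01 q12 q23 q34 by simp_all
      have "H = ({x0,x1,x2,x3,x4,z0}, {{x0,x1},{x1,x2},{x2,x3},{x3,x4},{x4,x0},{z0,x0},{z0,x1},{z0,x2},{z0,x3},{z0,x4}})"
        by (rule W5_sub[OF crit dd a az(1) az'])
      then have "graph_iso H W5" by (rule W5_iso[OF _ dd])
      then show False using assms(3) by blast
    qed
  qed
qed

end
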